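(* The theory $\mathsf{iGL}$ is closed under box-translation: for every modal proposition $A$, if $\mathsf{iGL}\vdash A$ then $\mathsf{iGL}\vdash A^\Box$.
   Context: Modal language: propositional variables, $\bot$, $\wedge,\vee,\to$, $\Box$; atomic = variables and $\bot$. $\mathsf{iGL}$: intuitionistic propositional logic in the modal language plus $\Box(A\to B)\to(\Box A\to\Box B)$, $\Box A\to\Box\Box A$, $\Box(\Box A\to A)\to\Box A$, closed under modus ponens and necessitation. Box-translation: $A^\Box:=A\wedge\Box A$ for atomic $A$; $(A\circ B)^\Box:=A^\Box\circ B^\Box$ for $\circ\in\{\wedge,\vee\}$; $(A\to B)^\Box:=(A^\Box\to B^\Box)\wedge\Box(A^\Box\to B^\Box)$; $(\Box A)^\Box:=\Box(A^\Box)$. *)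

theory Defs
  imports Main
begin

datatype fm =
    Var nat
  | Bot
  | And fm fm
  | Or fm fm
  | Imp fm fm
  | Box fm

inductive iGL :: "fm \<Rightarrow> bool" where
  ax_k1: "iGL (Imp A (Imp B A))"
| ax_s: "iGL (Imp (Imp A (Imp B C)) (Imp (Imp A B) (Imp A C)))"
| ax_and1: "iGL (Imp (And A B) A)"
| ax_and2: "iGL (Imp (And A B) B)"
| ax_andI: "iGL (Imp A (Imp B (And A B)))"
| ax_or1: "iGL (Imp A (Or A B))"
| ax_or2: "iGL (Imp B (Or A B))"
| ax_orE: "iGL (Imp (Imp A C) (Imp (Imp B C) (Imp (Or A B) C)))"
| ax_efq: "iGL (Imp Bot A)"
| ax_K: "iGL (Imp (Box (Imp A B)) (Imp (Box A) (Box B)))"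
| ax_4: "iGL (Imp (Box A) (Box (Box A)))"
| ax_L: "iGL (Imp (Box (Imp (Box A) A)) (Box A))"
| mp: "iGL (Imp A B) \<Longrightarrow> iGL A \<Longrightarrow> iGL B"
| nec: "iGL A \<Longrightarrow> iGL (Box A)"

fun boxtr :: "fm \<Rightarrow> fm" where
  "boxtr (Var p) = And (Var p) (Box (Var p))"
| "boxtr Bot = And Bot (Box Bot)"
| "boxtr (And A B) = And (boxtr A) (boxtr B)"
| "boxtr (Or A B) = Or (boxtr A) (boxtr B)"
| "boxtr (Imp A B) = And (Imp (boxtr A) (boxtr B)) (Box (Imp (boxtr A) (boxtr B)))"
| "boxtr (Box A) = Box (boxtr A)"

end

theory Submission
  imports Defs
begin

inductive der :: "fm set \<Rightarrow> fm \<Rightarrow> bool" where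
  hyp: "A \<in> \<Gamma> \<Longrightarrow> der \<Gamma> A"
| axm: "iGL A \<Longrightarrow> der \<Gamma> A"
| dmp: "der \<Gamma> (Imp A B) \<Longrightarrow> der \<Gamma> A \<Longrightarrow> der \<Gamma> B"

lemma iGL_id: "iGL (Imp A A)"
  by (meson iGL.ax_k1 iGL.ax_s iGL.mp)

lemma D_imp: "der \<Delta> B \<Longrightarrow> \<Delta> = insert A \<Gamma> \<Longrightarrow> der \<Gamma> (Imp A B)"
proof (induction rule: der.induct)
  case (hyp B \<Delta>)
  then show ?case
    by (metis der.hyp der.axm dmp iGL.ax_k1 iGL_id insertE)
next
  case (axm B \<Delta>)
  then show ?case by (meson der.axm dmp iGL.ax_k1)
next
  case (dmp \<Delta> C B)
  then show ?case by (meson der.axm der.dmp iGL.ax_s)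
qed

lemma D_imp': "der (insert A \<Gamma>) B \<Longrightarrow> der \<Gamma> (Imp A B)"
  using D_imp by blast

lemma sound: "der \<Gamma> A \<Longrightarrow> \<Gamma> = {} \<Longrightarrow> iGL A"
  by (induction rule: der.induct) (auto intro: iGL.mp)

lemma D_andI: "der \<Gamma> A \<Longrightarrow> der \<Gamma> B \<Longrightarrow> der \<Gamma> (And A B)"
  by (meson der.axm dmp iGL.ax_andI)
lemma D_and1: "der \<Gamma> (And A B) \<Longrightarrow> der \<Gamma> A"
  by (meson der.axm dmp iGL.ax_and1)
lemma D_and2: "der \<Gamma> (And A B) \<Longrightarrow> der \<Gamma> B"
  by (meson der.axm dmp iGL.ax_and2)
lemma D_or1: "der \<Gamma> A \<Longrightarrow> der \<Gamma> (Or A B)"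
  by (meson der.axm dmp iGL.ax_or1)
lemma D_or2: "der \<Gamma> B \<Longrightarrow> der \<Gamma> (Or A B)"
  by (meson der.axm dmp iGL.ax_or2)
lemma D_orE: "der \<Gamma> (Or A B) \<Longrightarrow> der (insert A \<Gamma>) C \<Longrightarrow> der (insert B \<Gamma>) C \<Longrightarrow> der \<Gamma> C"
  by (meson D_imp' der.axm dmp iGL.ax_orE)
lemma D_efq: "der \<Gamma> Bot \<Longrightarrow> der \<Gamma> A"
  by (meson der.axm dmp iGL.ax_efq)
lemma D_K: "der \<Gamma> (Box (Imp A B)) \<Longrightarrow> der \<Gamma> (Box A) \<Longrightarrow> der \<Gamma> (Box B)"
  by (meson der.axm dmp iGL.ax_K)
lemma D_4: "der \<Gamma> (Box A) \<Longrightarrow> der \<Gamma> (Box (Box A))"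
  by (meson der.axm dmp iGL.ax_4)
lemma D_L: "der \<Gamma> (Box (Imp (Box A) A)) \<Longrightarrow> der \<Gamma> (Box A)"
  by (meson der.axm dmp iGL.ax_L)
lemma D_nec: "iGL A \<Longrightarrow> der \<Gamma> (Box A)"
  by (simp add: der.axm iGL.nec)
lemma D_bmono: "iGL (Imp A B) \<Longrightarrow> der \<Gamma> (Box A) \<Longrightarrow> der \<Gamma> (Box B)"
  by (meson D_K D_nec)
lemma D_box_and: "der \<Gamma> (Box A) \<Longrightarrow> der \<Gamma> (Box B) \<Longrightarrow> der \<Gamma> (Box (And A B))"
  by (meson D_K D_nec iGL.ax_andI)

lemma boxed: "der \<Gamma> (boxtr A) \<Longrightarrow> der \<Gamma> (Box (boxtr A))"
proof (induction A arbitrary: \<Gamma>)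
  case (Var x)
  then show ?case using D_and2 D_4 D_box_and by (metis boxtr.simps(1))
next
  case Bot
  then show ?case using D_and1 D_efq by (metis boxtr.simps(2))
next
  case (And A1 A2)
  then show ?case using D_and1 D_and2 D_box_and by (metis boxtr.simps(3))
next
  case (Or A1 A2)
  have "der \<Gamma> (Or (boxtr A1) (boxtr A2))" using Or.prems by simp
  moreover have "der (insert (boxtr A1) \<Gamma>) (Box (Or (boxtr A1) (boxtr A2)))"
    by (meson D_bmono Or.IH(1) der.hyp iGL.ax_or1 insertI1)
  moreover have "der (insert (boxtr A2) \<Gamma>) (Box (Or (boxtr A1) (boxtr A2)))"
    by (meson D_bmono Or.IH(2) der.hyp iGL.ax_or2 insertI1)
  ultimately show ?case by (metis D_orE boxtr.simps(4))
next
  case (Imp A1 A2)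
  then show ?case using D_and2 D_4 D_box_and by (metis boxtr.simps(5))
next
  case (Box A)
  then show ?case using D_4 by (metis boxtr.simps(6))
qed

fun imps :: "fm list \<Rightarrow> fm \<Rightarrow> fm" where
  "imps [] Y = Y"
| "imps (G # Gs) Y = Imp G (imps Gs Y)"

lemma imps_app: "imps (Gs @ [X]) Y = imps Gs (Imp X Y)"
  by (induction Gs) auto

lemma der_imps: "der (set Gs \<union> \<Gamma>) Y \<Longrightarrow> der \<Gamma> (imps Gs Y)"
proof (induction Gs arbitrary: \<Gamma>)
  case Nil
  then show ?case by simp
next
  case (Cons G Gs)
  have "der (set Gs \<union> insert G \<Gamma>) Y" using Cons.prems by (simp add: insert_commute)
  then have "der (insert G \<Gamma>) (imps Gs Y)" by (rule Cons.IH)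
  then show ?case by (simp add: D_imp')
qed

lemma box_imps: "der \<Gamma> (Box (imps Gs Y)) \<Longrightarrow> \<forall>G\<in>set Gs. der \<Gamma> (Box G) \<Longrightarrow> der \<Gamma> (Box Y)"
proof (induction Gs)
  case Nil
  then show ?case by simp
next
  case (Cons G Gs)
  have "der \<Gamma> (Box (Imp G (imps Gs Y)))" using Cons.prems(1) by simp
  moreover have "der \<Gamma> (Box G)" using Cons.prems(2) by simp
  ultimately have "der \<Gamma> (Box (imps Gs Y))" by (rule D_K)
  then show ?case using Cons.IH Cons.prems(2) by simp
qed

lemma tr_imp:
  assumes "der (insert (boxtr X) (boxtr ` set Gs)) (boxtr Y)"
  shows "der (boxtr ` set Gs) (boxtr (Imp X Y))"
proof -
  let ?L = "map boxtr Gs"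
  have h1: "der (boxtr ` set Gs) (Imp (boxtr X) (boxtr Y))" using assms D_imp' by blast
  have "der (set (?L @ [boxtr X]) \<union> {}) (boxtr Y)" using assms by (simp add: insert_commute)
  then have "der {} (imps (?L @ [boxtr X]) (boxtr Y))" by (rule der_imps)
  then have "iGL (imps ?L (Imp (boxtr X) (boxtr Y)))" using sound imps_app by metis
  then have "der (boxtr ` set Gs) (Box (imps ?L (Imp (boxtr X) (boxtr Y))))" by (rule D_nec)
  moreover have "\<forall>G\<in>set ?L. der (boxtr ` set Gs) (Box G)"
  proof
    fix G assume "G \<in> set ?L"
    then obtain H where "H \<in> set Gs" "G = boxtr H" by auto
    then show "der (boxtr ` set Gs) (Box G)" using boxed[OF der.hyp] by simp
  qed
  ultimately have "der (boxtr ` set Gs) (Box (Imp (boxtr X) (boxtr Y)))" by (rule box_imps)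
  then show ?thesis using h1 D_andI by simp
qed

lemma tr_impE: "der \<Gamma> (boxtr (Imp X Y)) \<Longrightarrow> der \<Gamma> (boxtr X) \<Longrightarrow> der \<Gamma> (boxtr Y)"
proof -
  assume a: "der \<Gamma> (boxtr (Imp X Y))" and b: "der \<Gamma> (boxtr X)"
  from a have "der \<Gamma> (Imp (boxtr X) (boxtr Y))" by (simp add: D_and1)
  then show ?thesis using b by (rule dmp)
qed

lemma top: "der (boxtr ` set []) (boxtr A) \<Longrightarrow> iGL (boxtr A)"
  using sound by simp

theorem proposition4p16:
  fixes A :: fm
  assumes "iGL A"
  shows "iGL (boxtr A)"
  using assms
proof (induction rule: iGL.induct)
  case (ax_k1 A B)
  show ?case
    apply (rule top, rule tr_imp, simp only: list.set image_empty image_insert)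
    apply (rule tr_imp[where Gs="[A]", simplified list.set image_empty image_insert])
    by (simp add: der.hyp)
next
  case (ax_s A B C)
  show ?case
    apply (rule top, rule tr_imp, simp only: list.set image_empty image_insert)
    apply (rule tr_imp[where Gs="[Imp A (Imp B C)]", simplified list.set image_empty image_insert])
    apply (rule tr_imp[where Gs="[Imp A B, Imp A (Imp B C)]", simplified list.set image_empty image_insert])
    apply (rule tr_impE[where X=B])
     apply (rule tr_impE[where X=A])
      apply (rule der.hyp, simp)
     apply (rule der.hyp, simp)
    apply (rule tr_impE[where X=A])
     apply (rule der.hyp, simp)
    apply (rule der.hyp, simp)
    done
next
  case (ax_and1 A B)
  show ?case
    apply (rule top, rule tr_imp, simp only: list.set image_empty image_insert)
    by (simp, rule D_and1, rule der.hyp, simp)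
next
  case (ax_and2 A B)
  show ?case
    apply (rule top, rule tr_imp, simp only: list.set image_empty image_insert)
    by (simp, rule D_and2, rule der.hyp, simp)
next
  case (ax_andI A B)
  show ?case
    apply (rule top, rule tr_imp, simp only: list.set image_empty image_insert)
    apply (rule tr_imp[where Gs="[A]", simplified list.set image_empty image_insert])
    by (simp, rule D_andI; rule der.hyp, simp)
next
  case (ax_or1 A B)
  show ?case
    apply (rule top, rule tr_imp, simp only: list.set image_empty image_insert)
    by (simp, rule D_or1, rule der.hyp, simp)
next
  case (ax_or2 A B)
  show ?case
    apply (rule top, rule tr_imp, simp only: list.set image_empty image_insert)
    by (simp, rule D_or2, rule der.hyp, simp)
next
  case (ax_orE A C B)
  show ?case
    apply (rule top, rule tr_imp, simp only: list.set image_empty image_insert)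
    apply (rule tr_imp[where Gs="[Imp A C]", simplified list.set image_empty image_insert])
    apply (rule tr_imp[where Gs="[Imp B C, Imp A C]", simplified list.set image_empty image_insert])
    apply (rule D_orE[where A="boxtr A" and B="boxtr B"])
      apply (rule der.hyp, simp)
     apply (rule tr_impE[where X=A])
      apply (rule der.hyp, simp)
     apply (rule der.hyp, simp)
    apply (rule tr_impE[where X=B])
     apply (rule der.hyp, simp)
    apply (rule der.hyp, simp)
    done
next
  case (ax_efq A)
  show ?case
    apply (rule top, rule tr_imp, simp only: list.set image_empty image_insert)
    by (simp, rule D_efq, rule D_and1, rule der.hyp, simp)
next
  case (ax_K A B)
  show ?case
    apply (rule top, rule tr_imp, simp only: list.set image_empty image_insert)
    apply (rule tr_imp[where Gs="[Box (Imp A B)]", simplified list.set image_empty image_insert])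
    apply simp
    apply (rule D_K[where A="boxtr A"])
     apply (rule D_bmono[OF iGL.ax_and1])
     apply (rule der.hyp, simp)
    apply (rule der.hyp, simp)
    done
next
  case (ax_4 A)
  show ?case
    apply (rule top, rule tr_imp, simp only: list.set image_empty image_insert)
    by (simp, rule D_4, rule der.hyp, simp)
next
  case (ax_L A)
  show ?case
    apply (rule top, rule tr_imp, simp only: list.set image_empty image_insert)
    apply simp
    apply (rule D_L)
    apply (rule D_bmono[OF iGL.ax_and1])
    apply (rule der.hyp, simp)
    done
next
  case (mp A B)
  then show ?case by (metis boxtr.simps(5) iGL.ax_and1 iGL.mp)
next
  case (nec A)
  then show ?case by (simp add: iGL.nec)
qed

end
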